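(* Let $V,W$ be finite-dimensional real inner product spaces and $L:V\to W$ a linear map. Assume $G:W\to W$ is independent of $\ker L^*$ with respect to the decomposition $W=\ker L^*\oplus\operatorname{im}L^{+*}$, and that $G(W)\subseteq\operatorname{im}L$. Then there exists a function $F:V\to V$ such that $G(x)=LF(L^*x)$ for all $x\in W$; more specifically, $F(y):=L^+G(L^{+*}y)$ is such a function.
   Context: $L^*$ is the adjoint of $L$. The Moore–Penrose pseudoinverse $L^+:W\to V$ is the unique linear map with $LL^+L=L$, $L^+LL^+=L^+$, and $LL^+$, $L^+L$ symmetric positive semi-definite; $L^{+*}$ denotes $(L^+)^*=(L^* )^+$. Given $W=W_1\oplus W_2$, a map $G:W\to W$ is independent of $W_1$ if $G(w_1+w_2)=G(w_2)$ for all $w_1\in W_1,w_2\in W_2$. *)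

theory Defs
  imports "HOL-Analysis.Analysis"
begin

definition sym_psd :: "('a::real_inner \<Rightarrow> 'a) \<Rightarrow> bool" where
  "sym_psd A \<longleftrightarrow> (\<forall>x y. A x \<bullet> y = x \<bullet> A y) \<and> (\<forall>x. 0 \<le> x \<bullet> A x)"

definition is_mp_pinv :: "('v::real_inner \<Rightarrow> 'w::real_inner) \<Rightarrow> ('w \<Rightarrow> 'v) \<Rightarrow> bool" where
  "is_mp_pinv L P \<longleftrightarrow> linear P \<and> L \<circ> P \<circ> L = L \<and> P \<circ> L \<circ> P = P
      \<and> sym_psd (L \<circ> P) \<and> sym_psd (P \<circ> L)"

definition mp_pinv :: "('v::real_inner \<Rightarrow> 'w::real_inner) \<Rightarrow> ('w \<Rightarrow> 'v)" where
  "mp_pinv L = (THE P. is_mp_pinv L P)"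

definition independent_of :: "'w set \<Rightarrow> 'w set \<Rightarrow> ('w::real_vector \<Rightarrow> 'a) \<Rightarrow> bool" where
  "independent_of W1 W2 G \<longleftrightarrow> (\<forall>w1\<in>W1. \<forall>w2\<in>W2. G (w1 + w2) = G w2)"

end

theory Submission
  imports Defs
begin

lemma proj_exists:
  fixes S :: "'a::euclidean_space set"
  assumes "subspace S"
  shows "\<exists>p. linear p \<and> (\<forall>x. p x \<in> S) \<and> (\<forall>x. \<forall>s\<in>S. (x - p x) \<bullet> s = 0)"
proof -
  obtain B where B: "0 \<notin> B" "B \<subseteq> S" "pairwise orthogonal B" "independent B" "span B = S"
    using orthogonal_basis_subspace[OF assms] by metis
  have fin: "finite B" using B(3) pairwise_orthogonal_imp_finite by blast
  define p where "p = (\<lambda>x. \<Sum>b\<in>B. (b \<bullet> x / (b \<bullet> b)) *\<^sub>R b)"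
  have lin: "linear p"
    unfolding p_def
    by (intro linearI) (simp_all add: inner_add_right add_divide_distrib scaleR_add_left sum.distrib
        scaleR_sum_right)
  have inS: "p x \<in> S" for x
    unfolding p_def using B(2) assms
    by (intro subspace_sum subspace_mul) auto
  have orth: "(x - p x) \<bullet> s = 0" if "s \<in> S" for x s
    using Gram_Schmidt_step[OF B(3), of s x] that B(5)
    by (simp add: p_def orthogonal_def inner_commute)
  show ?thesis using lin inS orth by blast
qed

lemma proj_id:
  fixes p :: "'a::euclidean_space \<Rightarrow> 'a"
  assumes "subspace S" "\<forall>x. p x \<in> S" "\<forall>x. \<forall>s\<in>S. (x - p x) \<bullet> s = 0" "y \<in> S"
  shows "p y = y"
proof -
  have "y - p y \<in> S" using assms by (simp add: subspace_diff)
  then have "(y - p y) \<bullet> (y - p y) = 0" using assms(3) by (metis rangeI subsetD imageE)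
  then show ?thesis by simp
qed

lemma proj_sym:
  fixes p :: "'a::euclidean_space \<Rightarrow> 'a"
  assumes "\<forall>x. p x \<in> S" "\<forall>x. \<forall>s\<in>S. (x - p x) \<bullet> s = 0"
  shows "p x \<bullet> y = x \<bullet> p y" and "0 \<le> x \<bullet> p x"
proof -
  have a: "(y - p y) \<bullet> p x = 0" "(x - p x) \<bullet> p y = 0" "(x - p x) \<bullet> p x = 0" using assms by auto
  have "p x \<bullet> y = p x \<bullet> p y" using a(1) unfolding inner_diff_left by (simp add: inner_commute)
  moreover have "x \<bullet> p y = p x \<bullet> p y" using a(2) by (simp add: inner_diff_left)
  ultimately show "p x \<bullet> y = x \<bullet> p y" by simp
  from a show "0 \<le> x \<bullet> p x"
    by (simp add: inner_diff_left)
qed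

lemma mp_unique:
  fixes L :: "'v::euclidean_space \<Rightarrow> 'w::euclidean_space"
  assumes P: "is_mp_pinv L P" and Q: "is_mp_pinv L Q"
  shows "P = Q"
proof -
  have P1: "\<And>v. L (P (L v)) = L v" "\<And>w. P (L (P w)) = P w"
    "\<And>x y. L (P x) \<bullet> y = x \<bullet> L (P y)" "\<And>x y. P (L x) \<bullet> y = x \<bullet> P (L y)"
    using P unfolding is_mp_pinv_def sym_psd_def by (auto simp: fun_eq_iff)
  have Q1: "\<And>v. L (Q (L v)) = L v" "\<And>w. Q (L (Q w)) = Q w"
    "\<And>x y. L (Q x) \<bullet> y = x \<bullet> L (Q y)" "\<And>x y. Q (L x) \<bullet> y = x \<bullet> Q (L y)"
    using Q unfolding is_mp_pinv_def sym_psd_def by (auto simp: fun_eq_iff)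
  have A: "L (P x) = L (Q x)" for x
  proof -
    have "L (P x) \<bullet> y = L (Q x) \<bullet> y" for y
    proof -
      have "L (P x) \<bullet> y = x \<bullet> L (P y)" by (rule P1(3))
      also have "\<dots> = x \<bullet> L (Q (L (P y)))" by (simp add: Q1(1))
      also have "\<dots> = L (Q x) \<bullet> L (P y)" by (simp add: Q1(3))
      also have "\<dots> = L (P (L (Q x))) \<bullet> y" by (simp add: P1(3))
      also have "\<dots> = L (Q x) \<bullet> y" by (simp add: P1(1))
      finally show ?thesis .
    qed
    then show ?thesis by (metis vector_eq_rdot)
  qed
  have C: "P (L x) = Q (L x)" for x
  proof -
    have "Q (L x) \<bullet> y = P (L x) \<bullet> y" for y
    proof -
      have "Q (L x) \<bullet> y = x \<bullet> Q (L y)" by (rule Q1(4))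
      also have "\<dots> = x \<bullet> Q (L (P (L y)))" by (simp add: P1(1))
      also have "\<dots> = Q (L x) \<bullet> P (L y)" by (simp add: Q1(4))
      also have "\<dots> = P (L (Q (L x))) \<bullet> y" by (simp add: P1(4))
      also have "\<dots> = P (L x) \<bullet> y" by (simp add: Q1(1))
      finally show ?thesis .
    qed
    then show ?thesis by (metis vector_eq_rdot)
  qed
  show ?thesis
  proof
    fix x
    have "P x = P (L (P x))" by (simp add: P1(2))
    also have "\<dots> = Q (L (P x))" by (rule C)
    also have "\<dots> = Q (L (Q x))" by (simp add: A)
    also have "\<dots> = Q x" by (simp add: Q1(2))
    finally show "P x = Q x" .
  qed
qed

lemma mp_exists:
  fixes L :: "'v::euclidean_space \<Rightarrow> 'w::euclidean_space"
  assumes lin: "linear L"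
  shows "\<exists>P. is_mp_pinv L P"
proof -
  define S where "S = range (adjoint L)"
  have subS: "subspace S" unfolding S_def by (simp add: adjoint_linear lin linear_subspace_image)
  have subR: "subspace (range L)" by (simp add: lin linear_subspace_image)
  obtain q where q: "linear q" "\<forall>x. q x \<in> S" "\<forall>x. \<forall>s\<in>S. (x - q x) \<bullet> s = 0"
    using proj_exists[OF subS] by blast
  obtain p where p: "linear p" "\<forall>x. p x \<in> range L" "\<forall>x. \<forall>s\<in>range L. (x - p x) \<bullet> s = 0"
    using proj_exists[OF subR] by blast
  have Lq: "L (q v) = L v" for v
  proof -
    have "L (v - q v) \<bullet> w = 0" for w
      using q(3) by (simp add: adjoint_clauses(1)[OF lin, symmetric] S_def)
    then have "L (v - q v) = 0" by (metis inner_eq_zero_iff)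
    then show ?thesis by (simp add: linear_diff[OF lin])
  qed
  have inj: "inj_on L S"
  proof (rule inj_onI)
    fix a b assume ab: "a \<in> S" "b \<in> S" "L a = L b"
    have "a - b \<in> S" using ab subS by (simp add: subspace_diff)
    then obtain c where c: "a - b = adjoint L c" unfolding S_def by blast
    have "L (a - b) = 0" using ab by (simp add: linear_diff[OF lin])
    then have "(a - b) \<bullet> (a - b) = 0"
      by (metis c adjoint_clauses(2)[OF lin] inner_zero_right)
    then show "a = b" by simp
  qed
  obtain g where g: "linear g" "\<forall>x. g x \<in> S" "\<forall>v\<in>S. g (L v) = v"
    using linear_exists_left_inverse_on[OF lin subS inj] by blast
  have gL: "g (L v) = q v" for v
  proof -
    have "g (L v) = g (L (q v))" by (simp add: Lq)
    also have "\<dots> = q v" using g(3) q(2) by blast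
    finally show ?thesis .
  qed
  have Lg: "L (g w) = w" if "w \<in> range L" for w
    using that gL Lq by auto
  define P where "P = g \<circ> p"
  have LP: "L (P w) = p w" for w using Lg p(2) by (simp add: P_def)
  have PL: "P (L v) = q v" for v
    using proj_id[OF subR p(2) p(3)] gL by (simp add: P_def)
  have "linear P" unfolding P_def using g(1) p(1) by (simp add: linear_compose)
  moreover have "L \<circ> P \<circ> L = L" by (simp add: fun_eq_iff PL Lq)
  moreover have "P \<circ> L \<circ> P = P"
  proof
    fix w
    have "L (g (p w)) = p w" using Lg p(2) by blast
    then show "(P \<circ> L \<circ> P) w = P w"
      by (simp add: P_def proj_id[OF subR p(2) p(3)] p(2))
  qed
  moreover have "sym_psd (L \<circ> P)" unfolding sym_psd_def
    using proj_sym[OF p(2) p(3)] by (simp add: LP)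
  moreover have "sym_psd (P \<circ> L)" unfolding sym_psd_def
    using proj_sym[OF q(2) q(3)] by (simp add: PL)
  ultimately show ?thesis unfolding is_mp_pinv_def by blast
qed

theorem mainTheorem9:
  fixes L :: "'v::euclidean_space \<Rightarrow> 'w::euclidean_space"
    and G :: "'w \<Rightarrow> 'w"
  assumes "linear L"
    and "independent_of {x. adjoint L x = 0} (range (adjoint (mp_pinv L))) G"
    and "range G \<subseteq> range L"
  shows "(\<exists>F :: 'v \<Rightarrow> 'v. \<forall>x. G x = L (F (adjoint L x)))
     \<and> (let F = (\<lambda>y. mp_pinv L (G (adjoint (mp_pinv L) y))) in \<forall>x. G x = L (F (adjoint L x)))"
proof -
  note lin = assms(1)
  define P where "P = mp_pinv L"
  obtain P0 where P0: "is_mp_pinv L P0" using mp_exists[OF lin] by blast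
  have "is_mp_pinv L P"
    unfolding P_def mp_pinv_def
    by (rule theI[of _ P0], rule P0, rule mp_unique[OF _ P0])
  then have P1: "linear P" "\<And>v. L (P (L v)) = L v"
    "\<And>x y. L (P x) \<bullet> y = x \<bullet> L (P y)"
    unfolding is_mp_pinv_def sym_psd_def by (auto simp: fun_eq_iff)
  have adj: "adjoint P (adjoint L x) = L (P x)" for x
  proof -
    have "z \<bullet> adjoint P (adjoint L x) = z \<bullet> L (P x)" for z
      by (simp add: adjoint_clauses(1)[OF P1(1)] adjoint_clauses(1)[OF lin] P1(3))
    then show ?thesis by (metis vector_eq_ldot)
  qed
  have ker: "adjoint L (x - L (P x)) = 0" for x
  proof -
    have "z \<bullet> adjoint L (x - L (P x)) = 0" for z
    proof -
      have "z \<bullet> adjoint L (x - L (P x)) = L z \<bullet> x - L z \<bullet> L (P x)"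
        by (simp add: adjoint_clauses(1)[OF lin] inner_diff_right)
      also have "L z \<bullet> L (P x) = L (P (L z)) \<bullet> x" by (simp add: P1(3))
      finally show ?thesis by (simp add: P1(2))
    qed
    then show ?thesis by (metis inner_eq_zero_iff)
  qed
  have key: "G x = L (P (G (adjoint P (adjoint L x))))" for x
  proof -
    have "G x = G ((x - L (P x)) + L (P x))" by simp
    also have "\<dots> = G (L (P x))"
    proof -
      have m1: "x - L (P x) \<in> {x. adjoint L x = 0}" using ker by simp
      have m2: "L (P x) \<in> range (adjoint (mp_pinv L))"
        unfolding P_def[symmetric] by (rule image_eqI[where x="adjoint L x" and f="adjoint P", OF adj[of x, symmetric]]) simp
      show ?thesis using assms(2)[unfolded independent_of_def, rule_format, OF m1 m2] by simp
    qed
    finally have e: "G x = G (adjoint P (adjoint L x))" by (simp add: adj)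
    obtain z where "G (adjoint P (adjoint L x)) = L z" using assms(3) by (metis rangeI subsetD imageE)
    then have "G x = L z" using e by simp
    then show ?thesis using e P1(2)[of z] by simp
  qed
  show ?thesis unfolding Let_def P_def[symmetric]
    by (intro conjI exI[of _ "\<lambda>y. P (G (adjoint P y))"] allI; rule key)
qed

end
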